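(* Let $C$ be a compact Hausdorff space, and let $X$ be a topological space which is written in two ways as a topological coproduct $X=\bigsqcup_{i\in\mathbb{N}}C_i=\bigsqcup_{i\in\mathbb{N}}C'_i$ where for each $i$ there are homeomorphisms $\eta_i:C\to C_i$ and $\eta'_i:C\to C'_i$. Let $\pi,\pi':X\to\mathbb{N}$ be given by $\pi(C_i)=\{i\}$ and $\pi'(C'_i)=\{i\}$, and let $\varepsilon=\{e:\exists f\in\zeta,\ e\subseteq(\pi\times\pi)^{-1}(f)\}$ and $\varepsilon'=\{e:\exists f\in\zeta,\ e\subseteq(\pi'\times\pi')^{-1}(f)\}$, where $\zeta=\{f\subseteq\mathbb{N}\times\mathbb{N}: f\setminus\Delta\mathbb{N}\text{ finite}\}$. Let $Z$ be a compact metrizable space. If $X+_fZ\in\mathrm{Pers}(\varepsilon)$ and $X+_gZ\in\mathrm{Pers}(\varepsilon')$, then $X+_fZ$ and $X+_gZ$ are homeomorphic.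
   Context: Artin–Wraith glueing: $\mathrm{Closed}(A)$ is the set of closed subsets of $A$; $f:\mathrm{Closed}(A)\to\mathrm{Closed}(B)$ is admissible if $f(\emptyset)=\emptyset$ and $f$ preserves finite unions; $A+_fB$ is $A\sqcup B$ with closed sets the $D$ with $D\cap A$ closed in $A$, $D\cap B$ closed in $B$, $f(D\cap A)\subseteq D$. $\mathrm{Comp}(X)$: compact spaces $X+_fW$ with $W$ compact Hausdorff, morphisms continuous maps that are the identity on $X$. For a Hausdorff compactification $X+_fW$ of $X$ ($X$ dense), $e\subseteq X\times X$ is perspective if $\mathrm{Cl}_{(X+_fW)^2}(e)\cap((X+_fW)^2-X^2)\subseteq\{(p,p):p\in W\}$; $\varepsilon_f$ is the set of perspective sets; for a coarse structure $\varepsilon$, the compactification is perspective if $\varepsilon\subseteq\varepsilon_f$; $\mathrm{Pers}(\varepsilon)$ is the full subcategory of $\mathrm{Comp}(X)$ of perspective compactifications. The homeomorphism in the conclusion need not be the identity on $X$. *)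

theory Defs
  imports "HOL-Analysis.Analysis"
begin

definition admissible :: "'a topology \<Rightarrow> 'b topology \<Rightarrow> ('a set \<Rightarrow> 'b set) \<Rightarrow> bool" where
  "admissible A B f \<longleftrightarrow>
     (\<forall>D. closedin A D \<longrightarrow> closedin B (f D)) \<and> f {} = {} \<and>
     (\<forall>D E. closedin A D \<longrightarrow> closedin A E \<longrightarrow> f (D \<union> E) = f D \<union> f E)"

definition glue_carrier :: "'a topology \<Rightarrow> 'b topology \<Rightarrow> ('a + 'b) set" where
  "glue_carrier A B = Inl ` topspace A \<union> Inr ` topspace B"

text \<open>Closed sets of the Artin-Wraith glueing A +_f B.\<close>
definition glue_closed :: "'a topology \<Rightarrow> 'b topology \<Rightarrow> ('a set \<Rightarrow> 'b set) \<Rightarrow> ('a + 'b) set \<Rightarrow> bool" where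
  "glue_closed A B f D \<longleftrightarrow>
     D \<subseteq> glue_carrier A B \<and> closedin A (Inl -` D) \<and> closedin B (Inr -` D) \<and>
     Inr ` f (Inl -` D) \<subseteq> D"

definition glue :: "'a topology \<Rightarrow> 'b topology \<Rightarrow> ('a set \<Rightarrow> 'b set) \<Rightarrow> ('a + 'b) topology" where
  "glue A B f = topology (\<lambda>U. U \<subseteq> glue_carrier A B \<and> glue_closed A B f (glue_carrier A B - U))"

definition perspective :: "'a topology \<Rightarrow> 'b topology \<Rightarrow> ('a set \<Rightarrow> 'b set) \<Rightarrow> ('a \<times> 'a) set \<Rightarrow> bool" where
  "perspective X W f e \<longleftrightarrow>
     e \<subseteq> topspace X \<times> topspace X \<and>
     (prod_topology (glue X W f) (glue X W f) closure_of ((\<lambda>(x,y). (Inl x, Inl y)) ` e))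
        - (Inl ` topspace X \<times> Inl ` topspace X)
       \<subseteq> {(Inr p, Inr p) | p. p \<in> topspace W}"

definition hausdorff_compactification :: "'a topology \<Rightarrow> 'b topology \<Rightarrow> ('a set \<Rightarrow> 'b set) \<Rightarrow> bool" where
  "hausdorff_compactification X W f \<longleftrightarrow>
     admissible X W f \<and> compact_space W \<and> Hausdorff_space W \<and>
     compact_space (glue X W f) \<and> Hausdorff_space (glue X W f) \<and>
     (glue X W f) closure_of (Inl ` topspace X) = topspace (glue X W f)"

definition in_Pers :: "('a \<times> 'a) set set \<Rightarrow> 'a topology \<Rightarrow> 'b topology \<Rightarrow> ('a set \<Rightarrow> 'b set) \<Rightarrow> bool" where
  "in_Pers eps X W f \<longleftrightarrow> hausdorff_compactification X W f \<and> (\<forall>e\<in>eps. perspective X W f e)"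

definition zeta :: "(nat \<times> nat) set set" where
  "zeta = {F. finite (F - Id)}"

text \<open>The coarse structure induced by the decomposition C of X (pi x = the i with x in C i).\<close>
definition decomp_coarse :: "'a topology \<Rightarrow> (nat \<Rightarrow> 'a set) \<Rightarrow> ('a \<times> 'a) set set" where
  "decomp_coarse X C =
     {e. \<exists>F\<in>zeta. e \<subseteq> {(x,y). x \<in> topspace X \<and> y \<in> topspace X \<and>
                              ((THE i. x \<in> C i), (THE i. y \<in> C i)) \<in> F}}"

definition is_coproduct_decomp :: "'a topology \<Rightarrow> (nat \<Rightarrow> 'a set) \<Rightarrow> bool" where
  "is_coproduct_decomp X C \<longleftrightarrow>
     (\<forall>i. openin X (C i)) \<and> (\<Union>i. C i) = topspace X \<and>
     (\<forall>i j. i \<noteq> j \<longrightarrow> C i \<inter> C j = {})"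

end

theory Submission
  imports Defs
begin

lemma admissible_mono:
  assumes "admissible A B f" "closedin A D" "closedin A E" "D \<subseteq> E" shows "f D \<subseteq> f E"
proof -
  have "f E = f (D \<union> E)" using assms(4) by (simp add: Un_absorb1)
  also have "\<dots> = f D \<union> f E" using assms unfolding admissible_def by blast
  finally show ?thesis by blast
qed

lemma glue_closed_Un:
  assumes "admissible A B f" "glue_closed A B f D" "glue_closed A B f E"
  shows "glue_closed A B f (D \<union> E)"
proof -
  have cD: "closedin A (Inl -` D)" "closedin B (Inr -` D)" "Inr ` f (Inl -` D) \<subseteq> D" "D \<subseteq> glue_carrier A B"
    using assms(2) unfolding glue_closed_def by auto
  have cE: "closedin A (Inl -` E)" "closedin B (Inr -` E)" "Inr ` f (Inl -` E) \<subseteq> E" "E \<subseteq> glue_carrier A B"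
    using assms(3) unfolding glue_closed_def by auto
  have fu: "f (Inl -` D \<union> Inl -` E) = f (Inl -` D) \<union> f (Inl -` E)"
    using assms(1) cD(1) cE(1) unfolding admissible_def by blast
  have "Inl -` (D \<union> E) = Inl -` D \<union> Inl -` E" "Inr -` (D \<union> E) = Inr -` D \<union> Inr -` E"
    by auto
  then show ?thesis unfolding glue_closed_def using cD cE fu
    by (simp add: closedin_Un image_Un) blast
qed

lemma glue_closed_Inter:
  assumes "admissible A B f" "\<And>D. D \<in> \<D> \<Longrightarrow> glue_closed A B f D"
  shows "glue_closed A B f (glue_carrier A B \<inter> \<Inter>\<D>)"
proof -
  let ?c = "glue_carrier A B"
  have vl: "Inl -` ?c = topspace A" and vr: "Inr -` ?c = topspace B"
    by (auto simp: glue_carrier_def)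
  have fsub: "f S \<subseteq> topspace B" if "closedin A S" for S
    using assms(1) that unfolding admissible_def by (meson closedin_subset)
  show ?thesis
  proof (cases "\<D> = {}")
    case True
    then show ?thesis using vl vr fsub[of "topspace A"] by (auto simp: glue_closed_def glue_carrier_def)
  next
    case False
    have l: "Inl -` (?c \<inter> \<Inter>\<D>) = (\<Inter>D\<in>\<D>. Inl -` D)"
      using False assms(2) unfolding glue_closed_def by blast
    have r: "Inr -` (?c \<inter> \<Inter>\<D>) = (\<Inter>D\<in>\<D>. Inr -` D)"
      using False assms(2) unfolding glue_closed_def by blast
    have cl: "closedin A (\<Inter>D\<in>\<D>. Inl -` D)"
      using False assms(2) by (intro closedin_Inter) (auto simp: glue_closed_def)
    have cr: "closedin B (\<Inter>D\<in>\<D>. Inr -` D)"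
      using False assms(2) by (intro closedin_Inter) (auto simp: glue_closed_def)
    have "Inr ` f (\<Inter>D\<in>\<D>. Inl -` D) \<subseteq> D" if "D \<in> \<D>" for D
    proof -
      have "f (\<Inter>D\<in>\<D>. Inl -` D) \<subseteq> f (Inl -` D)"
        using that assms cl by (intro admissible_mono[OF assms(1)]) (auto simp: glue_closed_def)
      then show ?thesis using assms(2)[OF that] by (auto simp: glue_closed_def)
    qed
    moreover have "Inr ` f (\<Inter>D\<in>\<D>. Inl -` D) \<subseteq> ?c"
      using fsub[OF cl] by (auto simp: glue_carrier_def)
    ultimately show ?thesis using l r cl cr by (auto simp: glue_closed_def)
  qed
qed

lemma glue_istopology:
  assumes "admissible A B f"
  shows "istopology (\<lambda>U. U \<subseteq> glue_carrier A B \<and> glue_closed A B f (glue_carrier A B - U))"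
  unfolding istopology_def
proof (rule conjI; intro allI impI)
  let ?c = "glue_carrier A B"
  fix S T assume S: "S \<subseteq> ?c \<and> glue_closed A B f (?c - S)" and T: "T \<subseteq> ?c \<and> glue_closed A B f (?c - T)"
  have e: "?c - (S \<inter> T) = (?c - S) \<union> (?c - T)" by blast
  have "glue_closed A B f ((?c - S) \<union> (?c - T))"
    using S T glue_closed_Un[OF assms] by blast
  moreover have "S \<inter> T \<subseteq> ?c" using S by blast
  ultimately show "S \<inter> T \<subseteq> ?c \<and> glue_closed A B f (?c - S \<inter> T)"
    using e by simp
next
  let ?c = "glue_carrier A B"
  fix K assume K: "\<forall>S\<in>K. S \<subseteq> ?c \<and> glue_closed A B f (?c - S)"
  have e: "?c - \<Union>K = ?c \<inter> \<Inter>((\<lambda>S. ?c - S) ` K)" by blast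
  have "glue_closed A B f (?c \<inter> \<Inter>((\<lambda>S. ?c - S) ` K))"
    using K glue_closed_Inter[OF assms, of "(\<lambda>S. ?c - S) ` K"] by blast
  moreover have "\<Union>K \<subseteq> ?c" using K by blast
  ultimately show "\<Union>K \<subseteq> ?c \<and> glue_closed A B f (?c - \<Union>K)" using e by simp
qed

lemma openin_glue:
  assumes "admissible A B f"
  shows "openin (glue A B f) U \<longleftrightarrow> U \<subseteq> glue_carrier A B \<and> glue_closed A B f (glue_carrier A B - U)"
  unfolding glue_def using glue_istopology[OF assms] by simp

lemma glue_closed_carrier:
  assumes "admissible A B f"
  shows "glue_closed A B f (glue_carrier A B)"
  using glue_closed_Inter[OF assms, of "{}"] by simp

lemma topspace_glue:
  assumes "admissible A B f"
  shows "topspace (glue A B f) = glue_carrier A B"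
proof (rule subset_antisym)
  have o: "openin (glue A B f) (glue_carrier A B)"
    using assms glue_closed_Inter[OF assms, of "{}"] by (simp add: openin_glue glue_closed_def admissible_def)
  show "topspace (glue A B f) \<subseteq> glue_carrier A B"
    using openin_topspace[of "glue A B f"] unfolding openin_glue[OF assms] by blast
  show "glue_carrier A B \<subseteq> topspace (glue A B f)"
    using openin_subset[OF o] .
qed

lemma closedin_glue:
  assumes "admissible A B f"
  shows "closedin (glue A B f) D \<longleftrightarrow> glue_closed A B f D"
proof -
  have "closedin (glue A B f) D \<longleftrightarrow> D \<subseteq> glue_carrier A B \<and> glue_closed A B f (glue_carrier A B - (glue_carrier A B - D))"
    unfolding closedin_def topspace_glue[OF assms] openin_glue[OF assms] by auto
  also have "\<dots> \<longleftrightarrow> glue_closed A B f D"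
  proof -
    have eq: "D \<subseteq> glue_carrier A B \<Longrightarrow> glue_carrier A B - (glue_carrier A B - D) = D" by blast
    show ?thesis
    proof (cases "D \<subseteq> glue_carrier A B")
      case True then show ?thesis using eq by simp
    next
      case False then show ?thesis by (simp add: glue_closed_def)
    qed
  qed
  finally show ?thesis .
qed


lemma fsub_topspace:
  assumes "admissible A B f" "closedin A S" shows "f S \<subseteq> topspace B"
  using assms unfolding admissible_def by (meson closedin_subset)

lemma openin_glue_Inl:
  assumes "admissible A B f" "openin A U"
  shows "openin (glue A B f) (Inl ` U)"
proof -
  have U: "U \<subseteq> topspace A" using assms(2) openin_subset by blast
  have e: "glue_carrier A B - Inl ` U = Inl ` (topspace A - U) \<union> Inr ` topspace B"
    using U by (auto simp: glue_carrier_def)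
  have c: "closedin A (topspace A - U)" using assms(2) by blast
  have l: "Inl -` (Inl ` (topspace A - U) \<union> Inr ` topspace B) = topspace A - U" by auto
  have r: "Inr -` (Inl ` (topspace A - U) \<union> Inr ` topspace B) = topspace B" by auto
  have "glue_closed A B f (Inl ` (topspace A - U) \<union> Inr ` topspace B)"
    unfolding glue_closed_def l r using c fsub_topspace[OF assms(1) c]
    by (auto simp: glue_carrier_def)
  then show ?thesis unfolding openin_glue[OF assms(1)] e using U
    by (auto simp: glue_carrier_def)
qed

lemma closedin_glue_Inr:
  assumes "admissible A B f" "closedin B S"
  shows "closedin (glue A B f) (Inr ` S)"
proof -
  have l: "Inl -` (Inr ` S) = ({}::'a set)" by auto
  have r: "Inr -` (Inr ` S :: ('a + 'b) set) = S" by auto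
  have "f {} = {}" using assms(1) by (simp add: admissible_def)
  then show ?thesis unfolding closedin_glue[OF assms(1)] glue_closed_def l r
    using assms(2) closedin_subset[OF assms(2)] by (auto simp: glue_carrier_def)
qed

lemma continuous_map_glue_Inl:
  assumes "admissible A B f"
  shows "continuous_map A (glue A B f) Inl"
  unfolding continuous_map_def
proof (intro conjI allI impI)
  show "Inl \<in> topspace A \<rightarrow> topspace (glue A B f)"
    by (auto simp: topspace_glue[OF assms] glue_carrier_def)
  fix V assume "openin (glue A B f) V"
  then have V: "V \<subseteq> glue_carrier A B" "glue_closed A B f (glue_carrier A B - V)"
    unfolding openin_glue[OF assms] by auto
  then have c: "closedin A (Inl -` (glue_carrier A B - V))" unfolding glue_closed_def by auto
  have "{x \<in> topspace A. Inl x \<in> V} = topspace A - Inl -` (glue_carrier A B - V)"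
    by (auto simp: glue_carrier_def)
  then show "openin A {x \<in> topspace A. Inl x \<in> V}" using c by auto
qed

lemma continuous_map_glue_Inr:
  assumes "admissible A B f"
  shows "continuous_map B (glue A B f) Inr"
  unfolding continuous_map_def
proof (intro conjI allI impI)
  show "Inr \<in> topspace B \<rightarrow> topspace (glue A B f)"
    by (auto simp: topspace_glue[OF assms] glue_carrier_def)
  fix V assume "openin (glue A B f) V"
  then have V: "V \<subseteq> glue_carrier A B" "glue_closed A B f (glue_carrier A B - V)"
    unfolding openin_glue[OF assms] by auto
  then have c: "closedin B (Inr -` (glue_carrier A B - V))" unfolding glue_closed_def by auto
  have "{x \<in> topspace B. Inr x \<in> V} = topspace B - Inr -` (glue_carrier A B - V)"
    by (auto simp: glue_carrier_def)
  then show "openin B {x \<in> topspace B. Inr x \<in> V}" using c by auto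
qed

lemma glue_star:
  fixes A :: "'a topology" and B :: "'b topology"
  assumes adm: "admissible A B f" and cpt: "compact_space (glue A B f)"
    and Csub: "\<And>i. C i \<subseteq> topspace A"
    and persp: "perspective A B f {(x,y). x \<in> topspace A \<and> y \<in> topspace A \<and> (\<exists>i. x \<in> C i \<and> y \<in> C i)}"
    and p: "p \<in> topspace B" and V: "openin (glue A B f) V" "Inr p \<in> V"
  shows "\<exists>W. openin (glue A B f) W \<and> Inr p \<in> W \<and> (\<forall>i. Inl ` C i \<inter> W \<noteq> {} \<longrightarrow> Inl ` C i \<subseteq> V)"
proof -
  let ?Y = "glue A B f"
  let ?E = "{(x,y). x \<in> topspace A \<and> y \<in> topspace A \<and> (\<exists>i. x \<in> C i \<and> y \<in> C i)}"
  let ?P = "(\<lambda>(x,y). (Inl x, Inl y)) ` ?E :: (('a+'b) \<times> ('a+'b)) set"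
  define S where "S = topspace ?Y - V"
  have Scpt: "compactin ?Y S" unfolding S_def
    using V(1) cpt by (intro closedin_compact_space) auto
  have pY: "Inr p \<in> topspace ?Y" using p by (simp add: topspace_glue[OF adm] glue_carrier_def)
  have sep: "\<exists>W Q. openin ?Y W \<and> openin ?Y Q \<and> Inr p \<in> W \<and> q \<in> Q \<and> (W \<times> Q) \<inter> ?P = {}"
    if q: "q \<in> S" for q
  proof -
    have qY: "q \<in> topspace ?Y" "q \<noteq> Inr p" using q V(2) by (auto simp: S_def)
    have "(Inr p, q) \<notin> prod_topology ?Y ?Y closure_of ?P"
    proof
      assume "(Inr p, q) \<in> prod_topology ?Y ?Y closure_of ?P"
      then have "(Inr p, q) \<in> {(Inr p, Inr p) | p. p \<in> topspace B}"
        using persp unfolding perspective_def by blast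
      then show False using qY by auto
    qed
    then obtain T where T: "(Inr p, q) \<in> T" "openin (prod_topology ?Y ?Y) T" "\<not> (\<exists>y. y \<in> ?P \<and> y \<in> T)"
      using pY qY unfolding in_closure_of by auto
    then have T3: "T \<inter> ?P = {}" by blast
    obtain W Q where "openin ?Y W" "openin ?Y Q" "Inr p \<in> W" "q \<in> Q" "W \<times> Q \<subseteq> T"
      using T(1,2) unfolding openin_prod_topology_alt by meson
    then show ?thesis using T3 by blast
  qed
  then have "\<forall>q\<in>S. \<exists>wq. openin ?Y (fst wq) \<and> openin ?Y (snd wq) \<and> Inr p \<in> fst wq \<and> q \<in> snd wq \<and> (fst wq \<times> snd wq) \<inter> ?P = {}"
    by force
  then obtain g where g: "\<forall>q\<in>S. openin ?Y (fst (g q)) \<and> openin ?Y (snd (g q)) \<and> Inr p \<in> fst (g q) \<and> q \<in> snd (g q) \<and> (fst (g q) \<times> snd (g q)) \<inter> ?P = {}"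
    by (rule bchoice[elim_format]) blast
  define W where "W q = fst (g q)" for q
  define Q where "Q q = snd (g q)" for q
  have WQ: "\<And>q. q \<in> S \<Longrightarrow> openin ?Y (W q) \<and> openin ?Y (Q q) \<and> Inr p \<in> W q \<and> q \<in> Q q \<and> (W q \<times> Q q) \<inter> ?P = {}"
    using g unfolding W_def Q_def by blast
  obtain \<F> where F: "finite \<F>" "\<F> \<subseteq> Q ` S" "S \<subseteq> \<Union>\<F>"
    using compactinD[OF Scpt, of "Q ` S"] WQ by auto
  then obtain T where T: "T \<subseteq> S" "finite T" "\<F> = Q ` T"
    using finite_subset_image by metis
  define W0 where "W0 = (\<Inter>q\<in>T. W q) \<inter> topspace ?Y"
  have "openin ?Y W0" unfolding W0_def using T WQ by (intro openin_INT) auto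
  moreover have "Inr p \<in> W0" unfolding W0_def using T WQ pY by auto
  moreover have "Inl ` C i \<subseteq> V" if ne: "Inl ` C i \<inter> W0 \<noteq> {}" for i
  proof
    fix u :: "'a + 'b" assume u: "u \<in> Inl ` C i"
    then obtain b where b: "b \<in> C i" "u = Inl b" by auto
    obtain a where a: "a \<in> C i" "Inl a \<in> W0" using ne by blast
    show "u \<in> V"
    proof (rule ccontr)
      assume "u \<notin> V"
      moreover have "u \<in> topspace ?Y" using b Csub by (auto simp: topspace_glue[OF adm] glue_carrier_def)
      ultimately have "u \<in> S" by (simp add: S_def)
      then obtain q where q: "q \<in> T" "u \<in> Q q" using F T by auto
      have "Inl a \<in> W q" using a q(1) by (simp add: W0_def)
      moreover have "(Inl a, u) \<in> ?P"
      proof -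
        have "(a,b) \<in> ?E" using a b Csub by blast
        then show ?thesis using b(2) by (auto intro: image_eqI[where x="(a,b)"])
      qed
      ultimately show False using WQ[of q] q T by blast
    qed
  qed
  ultimately show ?thesis by blast
qed


definition rho :: "nat \<Rightarrow> real" where "rho n = 1 / (real n + 1)"

lemma rho_pos: "0 < rho n" by (simp add: rho_def)

lemma rho_mono: "m \<le> n \<Longrightarrow> rho n \<le> rho m"
  by (simp add: rho_def frac_le)

locale cptf = Metric_space M d
  for M :: "'b set" and d +
  fixes A :: "'a topology" and B :: "'b topology" and f :: "'a set \<Rightarrow> 'b set" and C :: "nat \<Rightarrow> 'a set"
  assumes adm: "admissible A B f"
    and cpt: "compact_space (glue A B f)" and haus: "Hausdorff_space (glue A B f)"
    and dense: "(glue A B f) closure_of (Inl ` topspace A) = topspace (glue A B f)"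
    and Cdec: "is_coproduct_decomp A C"
    and Ccpt: "\<And>i. compactin A (C i)" and Cne: "\<And>i. C i \<noteq> {}"
    and star: "\<And>p V. p \<in> topspace B \<Longrightarrow> openin (glue A B f) V \<Longrightarrow> Inr p \<in> V \<Longrightarrow>
        \<exists>W. openin (glue A B f) W \<and> Inr p \<in> W \<and> (\<forall>i. Inl ` C i \<inter> W \<noteq> {} \<longrightarrow> Inl ` C i \<subseteq> V)"
    and mtop: "mtopology = B"
    and cptB: "compact_space B"
    and Mne: "M \<noteq> {}"
begin

abbreviation "Y \<equiv> glue A B f"

lemma topB: "topspace B = M" using mtop topspace_mtopology by blast

lemma topY: "topspace Y = Inl ` topspace A \<union> Inr ` M"
  by (simp add: topspace_glue[OF adm] glue_carrier_def topB)

lemma CinA: "C i \<subseteq> topspace A"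
  using Cdec unfolding is_coproduct_decomp_def by blast

lemma Cdisj: "i \<noteq> j \<Longrightarrow> C i \<inter> C j = {}"
  using Cdec unfolding is_coproduct_decomp_def by blast

lemma Ccover: "x \<in> topspace A \<Longrightarrow> \<exists>i. x \<in> C i"
  using Cdec unfolding is_coproduct_decomp_def by blast

lemma Cuniq: "x \<in> C i \<Longrightarrow> x \<in> C j \<Longrightarrow> i = j"
  using Cdisj by blast

lemma openC: "openin Y (Inl ` C i)"
  using Cdec openin_glue_Inl[OF adm] unfolding is_coproduct_decomp_def by blast

lemma cptC: "compactin Y (Inl ` C i)"
  using image_compactin[OF Ccpt continuous_map_glue_Inl[OF adm]] .

lemma closedC: "closedin Y (Inl ` C i)"
  using compactin_imp_closedin[OF haus cptC] .

lemma closedC_Union: "finite F \<Longrightarrow> closedin Y (\<Union>i\<in>F. Inl ` C i)"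
  using closedC by (intro closedin_Union) auto

lemma closedB_Inr: "closedin B S \<Longrightarrow> closedin Y (Inr ` S)"
  using closedin_glue_Inr[OF adm] .

lemma openB_Inr: "openin Y V \<Longrightarrow> openin B {z \<in> M. Inr z \<in> V}"
  using continuous_map_glue_Inr[OF adm] unfolding continuous_map_def topB by blast

lemma normalY: "normal_space Y"
  using compact_Hausdorff_or_regular_imp_normal_space cpt haus by blast

lemma net_ex: "\<exists>N. finite N \<and> N \<subseteq> M \<and> M \<subseteq> (\<Union>c\<in>N. mball c e)" if "e > 0"
proof -
  have "\<exists>\<F>. finite \<F> \<and> \<F> \<subseteq> (\<lambda>c. mball c e) ` M \<and> topspace B \<subseteq> \<Union>\<F>"
  proof (rule compact_space_alt[THEN iffD1, OF cptB, rule_format])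
    show "(\<forall>U\<in>(\<lambda>c. mball c e) ` M. openin B U) \<and> topspace B \<subseteq> \<Union> ((\<lambda>c. mball c e) ` M)"
      using that mtop topB by auto
  qed
  then obtain \<F> where F: "finite \<F>" "\<F> \<subseteq> (\<lambda>c. mball c e) ` M" "M \<subseteq> \<Union>\<F>" using topB by auto
  then obtain N where "N \<subseteq> M" "finite N" "\<F> = (\<lambda>c. mball c e) ` N"
    using finite_subset_image by metis
  then show ?thesis using F by blast
qed

definition net :: "nat \<Rightarrow> 'b set" where
  "net n = (SOME N. finite N \<and> N \<subseteq> M \<and> M \<subseteq> (\<Union>c\<in>N. mball c (rho n)))"

lemma net: "finite (net n)" "net n \<subseteq> M" "M \<subseteq> (\<Union>c\<in>net n. mball c (rho n))"
  using someI_ex[OF net_ex[OF rho_pos[of n]]] unfolding net_def by blast+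

lemma V_ex: "\<exists>V. openin Y V \<and> Inr ` mball c (rho n) \<subseteq> V \<and> (Y closure_of V) \<inter> Inr ` M \<subseteq> Inr ` mball c (2 * rho n)"
proof -
  let ?S1 = "Inr ` mcball c (rho n) :: ('a+'b) set"
  let ?S2 = "Inr ` (M - mball c (2 * rho n)) :: ('a+'b) set"
  have c1: "closedin Y ?S1" using closedB_Inr mtop by auto
  have "closedin B (M - mball c (2 * rho n))"
    using mtop topB openin_mball by (metis closedin_diff closedin_topspace)
  then have c2: "closedin Y ?S2" using closedB_Inr by auto
  have "mcball c (rho n) \<subseteq> mball c (2 * rho n)"
    using rho_pos[of n] by (intro mcball_subset_mball_concentric) simp
  then have dj: "disjnt ?S1 ?S2" by (auto simp: disjnt_def)
  obtain U U2 where U: "openin Y U" "openin Y U2" "?S1 \<subseteq> U" "?S2 \<subseteq> U2" "disjnt U U2"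
    using normalY c1 c2 dj unfolding normal_space_def by meson
  have "U2 \<inter> Y closure_of U = {}"
    using openin_Int_closure_of_eq_empty[OF U(2)] U(5) by (auto simp: disjnt_def)
  then have "(Y closure_of U) \<inter> Inr ` M \<subseteq> Inr ` mball c (2 * rho n)"
    using U(4) by auto
  moreover have "Inr ` mball c (rho n) \<subseteq> U" using U(3) mball_subset_mcball by blast
  ultimately show ?thesis using U(1) by blast
qed

definition Vs :: "nat \<Rightarrow> 'b \<Rightarrow> ('a + 'b) set" where
  "Vs n c = (SOME V. openin Y V \<and> Inr ` mball c (rho n) \<subseteq> V \<and> (Y closure_of V) \<inter> Inr ` M \<subseteq> Inr ` mball c (2 * rho n))"

lemma Vs: "openin Y (Vs n c)" "Inr ` mball c (rho n) \<subseteq> Vs n c"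
  "(Y closure_of (Vs n c)) \<inter> Inr ` M \<subseteq> Inr ` mball c (2 * rho n)"
  using someI_ex[OF V_ex[of c n]] unfolding Vs_def by blast+

definition Idx :: "nat \<Rightarrow> (nat \<times> 'b) set" where
  "Idx N = (\<Union>a\<in>{..N}. {a} \<times> net a)"

lemma finite_Idx: "finite (Idx N)"
  unfolding Idx_def using net(1) by auto

definition Sx :: "nat \<Rightarrow> (nat \<times> 'b \<times> nat \<times> 'b) set" where
  "Sx N = {(a,c,b,c'). (a,c) \<in> Idx N \<and> (b,c') \<in> Idx N \<and> 2 * rho a + 2 * rho b \<le> d c c'}"

definition Gq :: "nat \<times> 'b \<times> nat \<times> 'b \<Rightarrow> ('a + 'b) set" where
  "Gq q = (case q of (a,c,b,c') \<Rightarrow> Y closure_of Vs a c \<inter> Y closure_of Vs b c')"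

definition E :: "nat \<Rightarrow> ('a + 'b) set" where
  "E N = (\<Union>q\<in>Sx N. Gq q)"

lemma finite_Sx: "finite (Sx N)"
proof -
  have "Sx N \<subseteq> (\<lambda>((a,c),(b,c')). (a,c,b,c')) ` (Idx N \<times> Idx N)"
    unfolding Sx_def by (auto simp: image_iff) (metis case_prod_conv)
  moreover have "finite ((\<lambda>((a,c),(b,c')). (a,c,b,c')) ` (Idx N \<times> Idx N))"
    using finite_Idx by simp
  ultimately show ?thesis using finite_subset by blast
qed

lemma E_closed: "closedin Y (E N)"
  unfolding E_def
proof (rule closedin_Union)
  show "finite (Gq ` Sx N)" using finite_Sx by simp
  fix T assume "T \<in> Gq ` Sx N"
  then obtain a c b c' where "T = Gq (a,c,b,c')" by auto
  then show "closedin Y T" unfolding Gq_def by auto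
qed

lemma E_mem: "u \<in> E N \<Longrightarrow> \<exists>a c b c'. (a,c) \<in> Idx N \<and> (b,c') \<in> Idx N \<and> 2 * rho a + 2 * rho b \<le> d c c'
   \<and> u \<in> Y closure_of Vs a c \<and> u \<in> Y closure_of Vs b c'"
proof -
  assume "u \<in> E N"
  then obtain q where q: "q \<in> Sx N" "u \<in> Gq q" unfolding E_def by blast
  obtain a c b c' where qq: "q = (a,c,b,c')" by (cases q) auto
  show ?thesis using q unfolding qq Sx_def Gq_def by auto
qed

lemma E_memI: "(a,c) \<in> Idx N \<Longrightarrow> (b,c') \<in> Idx N \<Longrightarrow> 2 * rho a + 2 * rho b \<le> d c c'
   \<Longrightarrow> u \<in> Y closure_of Vs a c \<Longrightarrow> u \<in> Y closure_of Vs b c' \<Longrightarrow> u \<in> E N"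
  unfolding E_def Sx_def Gq_def by (intro UN_I[of "(a,c,b,c')"]) auto

lemma E_noZ: "E N \<inter> Inr ` M = {}"
proof (rule ccontr)
  assume "E N \<inter> Inr ` M \<noteq> {}"
  then obtain z where z: "Inr z \<in> E N" "z \<in> M" by blast
  then obtain a c b c' where q: "(a,c) \<in> Idx N" "(b,c') \<in> Idx N" "2 * rho a + 2 * rho b \<le> d c c'"
    "Inr z \<in> Y closure_of Vs a c" "Inr z \<in> Y closure_of Vs b c'"
    using E_mem by blast
  have cM: "c \<in> M" "c' \<in> M" using q(1,2) net(2) unfolding Idx_def by auto
  have "z \<in> mball c (2 * rho a)" using Vs(3)[of a c] q(4) z(2) by auto
  moreover have "z \<in> mball c' (2 * rho b)" using Vs(3)[of b c'] q(5) z(2) by auto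
  ultimately have "d c c' < 2 * rho a + 2 * rho b"
    using triangle[of c z c'] commute[of z c'] by auto
  then show False using q(3) by simp
qed

lemma E_bound: "\<exists>K. \<forall>i\<ge>K. Inl ` C i \<inter> E N = {}"
proof -
  have Ecpt: "compactin Y (E N)" using closedin_compact_space[OF cpt E_closed] .
  have "E N \<subseteq> topspace Y" using E_closed closedin_subset by blast
  have Esub: "E N \<subseteq> (\<Union>i. Inl ` C i)"
  proof
    fix u assume u: "u \<in> E N"
    then have "u \<in> Inl ` topspace A \<union> Inr ` M" using \<open>E N \<subseteq> topspace Y\<close> topY by blast
    moreover have "u \<notin> Inr ` M" using u E_noZ by blast
    ultimately obtain x where "u = Inl x" "x \<in> topspace A" by blast
    then show "u \<in> (\<Union>i. Inl ` C i)" using Ccover by blast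
  qed
  obtain \<F> where F: "finite \<F>" "\<F> \<subseteq> range (\<lambda>i. Inl ` C i)" "E N \<subseteq> \<Union>\<F>"
    using compactinD[OF Ecpt, of "range (\<lambda>i. Inl ` C i)"] openC Esub by blast
  then obtain I where I: "finite I" "\<F> = (\<lambda>i. Inl ` C i) ` I"
    using finite_subset_image[OF F(1) F(2)] by blast
  obtain K where K: "\<forall>i\<in>I. i < K" using I(1) finite_nat_bounded by blast
  have "Inl ` C i \<inter> E N = {}" if "i \<ge> K" for i
  proof -
    have "Inl ` C i \<inter> Inl ` C j = {}" if "j \<in> I" for j
    proof -
      have "i \<noteq> j" using K that \<open>i \<ge> K\<close> by auto
      then show ?thesis using Cdisj[of i j] by blast
    qed
    then show ?thesis using F(3) I(2) by blast
  qed
  then show ?thesis by blast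
qed

definition Mb :: "nat \<Rightarrow> nat" where "Mb N = (SOME K. \<forall>i\<ge>K. Inl ` C i \<inter> E N = {})"

lemma Mb: "i \<ge> Mb N \<Longrightarrow> Inl ` C i \<inter> E N = {}"
  using someI_ex[OF E_bound[of N]] unfolding Mb_def by blast

end

context cptf begin

definition cand :: "nat \<Rightarrow> nat \<Rightarrow> bool" where
  "cand i n \<longleftrightarrow> n \<le> i \<and> Mb n \<le> i \<and> (\<exists>c\<in>net n. Inl ` C i \<subseteq> Vs n c)"

definition Lv :: "nat \<Rightarrow> nat" where "Lv i = (GREATEST n. cand i n)"

definition r :: "nat \<Rightarrow> 'b" where
  "r i = (if \<exists>n. cand i n then SOME c. c \<in> net (Lv i) \<and> Inl ` C i \<subseteq> Vs (Lv i) c else SOME z. z \<in> M)"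

lemma cand_le: "cand i n \<Longrightarrow> n \<le> i" by (simp add: cand_def)

lemma r_in_M: "r i \<in> M"
proof (cases "\<exists>n. cand i n")
  case True
  then obtain n where n: "cand i n" by blast
  have "cand i (Lv i)" unfolding Lv_def using GreatestI_nat[of "cand i" n i] n cand_le by blast
  then have "\<exists>c. c \<in> net (Lv i) \<and> Inl ` C i \<subseteq> Vs (Lv i) c" unfolding cand_def by blast
  from someI_ex[OF this] have "r i \<in> net (Lv i)" using True by (simp add: r_def)
  then show ?thesis using net(2) by blast
next
  case False
  then show ?thesis using Mne someI_ex[of "\<lambda>z. z \<in> M"] by (auto simp: r_def)
qed

lemma keyK:
  assumes n: "cand i n" and c': "c' \<in> net n" "Inl ` C i \<subseteq> Vs n c'"
  shows "d (r i) c' < 4 * rho n"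
proof -
  have Lc: "cand i (Lv i)" unfolding Lv_def using GreatestI_nat[of "cand i" n i] n cand_le by blast
  have nL: "n \<le> Lv i" unfolding Lv_def using Greatest_le_nat[of "cand i" n i] n cand_le by blast
  have "\<exists>c. c \<in> net (Lv i) \<and> Inl ` C i \<subseteq> Vs (Lv i) c" using Lc unfolding cand_def by blast
  from someI_ex[OF this] have ri: "r i \<in> net (Lv i)" "Inl ` C i \<subseteq> Vs (Lv i) (r i)"
    using n by (auto simp: r_def)
  have disj: "Inl ` C i \<inter> E (Lv i) = {}" using Lc Mb unfolding cand_def by blast
  obtain a where a: "a \<in> C i" using Cne by blast
  have a1: "Inl a \<in> Y closure_of Vs (Lv i) (r i)"
    using ri(2) a closure_of_subset[OF openin_subset[OF Vs(1)]] by blast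
  have a2: "Inl a \<in> Y closure_of Vs n c'"
    using c'(2) a closure_of_subset[OF openin_subset[OF Vs(1)]] by blast
  have lt: "d (r i) c' < 2 * rho (Lv i) + 2 * rho n"
  proof (rule ccontr)
    assume "\<not> ?thesis"
    then have le: "2 * rho (Lv i) + 2 * rho n \<le> d (r i) c'" by simp
    have "(Lv i, r i) \<in> Idx (Lv i)" using ri(1) unfolding Idx_def by auto
    moreover have "(n, c') \<in> Idx (Lv i)" using c'(1) nL unfolding Idx_def by auto
    ultimately have "Inl a \<in> E (Lv i)" using E_memI le a1 a2 by blast
    then show False using disj a by blast
  qed
  have "rho (Lv i) \<le> rho n" using rho_mono nL by blast
  then show ?thesis using lt by linarith
qed

lemma propB:
  assumes p: "p \<in> M" and del: "\<delta> > 0"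
  shows "\<exists>U F. openin Y U \<and> Inr p \<in> U \<and> finite F \<and> (\<forall>i. i \<notin> F \<longrightarrow> Inl ` C i \<inter> U \<noteq> {} \<longrightarrow> d (r i) p < \<delta>)"
proof -
  obtain m where m: "m > 0" "inverse (real m) < \<delta> / 5"
    using ex_inverse_of_nat_less[of "\<delta>/5"] del by auto
  have "rho m \<le> inverse (real m)" using m(1) by (simp add: rho_def field_simps)
  then have rm: "5 * rho m < \<delta>" using m(2) by linarith
  obtain c0 where c0: "c0 \<in> net m" "p \<in> mball c0 (rho m)" using net(3)[of m] p by blast
  have "Inr p \<in> Vs m c0" using Vs(2)[of c0 m] c0(2) by blast
  then obtain W where W: "openin Y W" "Inr p \<in> W" "\<forall>i. Inl ` C i \<inter> W \<noteq> {} \<longrightarrow> Inl ` C i \<subseteq> Vs m c0"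
    using star[of p "Vs m c0"] p topB Vs(1) by blast
  have "d (r i) p < \<delta>" if i: "i \<notin> {..< m + Mb m}" "Inl ` C i \<inter> W \<noteq> {}" for i
  proof -
    have sub: "Inl ` C i \<subseteq> Vs m c0" using W(3) i(2) by blast
    have "cand i m" using i(1) c0(1) sub unfolding cand_def by auto
    then have "d (r i) c0 < 4 * rho m" using keyK c0(1) sub by blast
    moreover have "d c0 p < rho m" using c0(2) by simp
    moreover have "d (r i) p \<le> d (r i) c0 + d c0 p"
      using triangle[of "r i" c0 p] r_in_M c0(2) by auto
    ultimately show ?thesis using rm by linarith
  qed
  then show ?thesis using W(1,2) by blast
qed

lemma propC:
  assumes p: "p \<in> M" and del: "\<delta> > 0"
  shows "infinite {i. d (r i) p < \<delta>}"
proof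
  assume fin: "finite {i. d (r i) p < \<delta>}"
  obtain U F where U: "openin Y U" "Inr p \<in> U" "finite F"
      "\<forall>i. i \<notin> F \<longrightarrow> Inl ` C i \<inter> U \<noteq> {} \<longrightarrow> d (r i) p < \<delta>"
    using propB[OF p del] by blast
  let ?G = "F \<union> {i. d (r i) p < \<delta>}"
  define U' where "U' = U - (\<Union>i\<in>?G. Inl ` C i)"
  have finG: "finite ?G" using U(3) fin by blast
  have oU: "openin Y U'" unfolding U'_def using U(1) closedC_Union[OF finG] by (rule openin_diff)
  have pU: "Inr p \<in> U'" unfolding U'_def using U(2) by auto
  have "Inr p \<in> topspace Y" using topY p by blast
  then have "Inr p \<in> Y closure_of (Inl ` topspace A)" using dense by simp
  then have "\<forall>T. Inr p \<in> T \<and> openin Y T \<longrightarrow> (\<exists>y. y \<in> Inl ` topspace A \<and> y \<in> T)"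
    unfolding in_closure_of by (rule conjunct2)
  then obtain y where y: "y \<in> Inl ` topspace A" "y \<in> U'"
    using oU pU by blast
  then obtain x where x0: "y = Inl x" "x \<in> topspace A" by blast
  then obtain j where x: "y = Inl x" "x \<in> C j" using Ccover by blast
  have yD: "y \<in> U - (\<Union>i\<in>?G. Inl ` C i)" using y(2) unfolding U'_def .
  have yU1: "y \<in> U" using yD by (rule DiffD1)
  have yU2: "y \<notin> (\<Union>i\<in>?G. Inl ` C i)" using yD by (elim DiffE)
  have yC: "y \<in> Inl ` C j" using x by simp
  have jG: "j \<notin> ?G"
  proof
    assume jG': "j \<in> ?G"
    have "y \<in> (\<Union>i\<in>?G. Inl ` C i)" by (rule UN_I[where B="\<lambda>i. Inl ` C i", OF jG' yC])
    then show False using yU2 by contradiction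
  qed
  then have jF: "j \<notin> F" and jd: "\<not> d (r j) p < \<delta>" by auto
  have "Inl ` C j \<inter> U \<noteq> {}" using yU1 yC by blast
  then show False using U(4) jF jd by blast
qed

lemma propA:
  assumes p: "p \<in> M" and V: "openin Y V" "Inr p \<in> V"
  shows "\<exists>\<delta>>0. \<exists>F. finite F \<and> (\<forall>i. i \<notin> F \<longrightarrow> d (r i) p < \<delta> \<longrightarrow> Inl ` C i \<subseteq> V)"
proof -
  define S where "S = topspace Y - V"
  have Scpt: "compactin Y S" unfolding S_def
    using V(1) cpt by (intro closedin_compact_space) auto
  have loc: "\<exists>g. openin Y (fst g) \<and> y \<in> fst g \<and> fst (snd g) > 0 \<and> finite (snd (snd g)) \<and>
       (\<forall>i. i \<notin> snd (snd g) \<longrightarrow> Inl ` C i \<inter> fst g \<noteq> {} \<longrightarrow> fst (snd g) \<le> d (r i) p)"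
    if y: "y \<in> S" for y
  proof -
    have "y \<in> Inl ` topspace A \<union> Inr ` M" "y \<notin> V" using y topY by (auto simp: S_def)
    then consider x where "y = Inl x" "x \<in> topspace A" | q where "y = Inr q" "q \<in> M" "q \<noteq> p"
      using V(2) by blast
    then show ?thesis
    proof cases
      case 1
      then obtain j where j: "x \<in> C j" using Ccover by blast
      have dj: "Inl ` C i \<inter> Inl ` C j = {}" if "i \<noteq> j" for i
        using Cdisj[OF that] by auto
      have "\<forall>i. i \<notin> {j} \<longrightarrow> Inl ` C i \<inter> Inl ` C j \<noteq> {} \<longrightarrow> (1::real) \<le> d (r i) p"
        using dj by blast
      then show ?thesis using openC[of j] 1 j
        by (intro exI[of _ "(Inl ` C j, 1, {j})"]) auto
    next
      case 2
      define e where "e = d q p / 2"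
      have e: "e > 0" using 2 p by (simp add: e_def)
      obtain U F where U: "openin Y U" "Inr q \<in> U" "finite F"
          "\<forall>i. i \<notin> F \<longrightarrow> Inl ` C i \<inter> U \<noteq> {} \<longrightarrow> d (r i) q < e"
        using propB[OF 2(2) e] by blast
      have "e \<le> d (r i) p" if "i \<notin> F" "Inl ` C i \<inter> U \<noteq> {}" for i
      proof -
        have "d (r i) q < e" using U(4) that by blast
        moreover have "d q p \<le> d q (r i) + d (r i) p" using triangle[of q "r i" p] r_in_M 2 p by auto
        moreover have "d q (r i) = d (r i) q" using commute by blast
        ultimately show ?thesis unfolding e_def by linarith
      qed
      then show ?thesis using U e 2 by (intro exI[of _ "(U, e, F)"]) auto
    qed
  qed
  then have "\<forall>y\<in>S. \<exists>g. openin Y (fst g) \<and> y \<in> fst g \<and> fst (snd g) > 0 \<and> finite (snd (snd g)) \<and>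
       (\<forall>i. i \<notin> snd (snd g) \<longrightarrow> Inl ` C i \<inter> fst g \<noteq> {} \<longrightarrow> fst (snd g) \<le> d (r i) p)"
    by (intro ballI)
  then obtain g where g: "\<forall>y\<in>S. openin Y (fst (g y)) \<and> y \<in> fst (g y) \<and> fst (snd (g y)) > 0 \<and> finite (snd (snd (g y))) \<and>
       (\<forall>i. i \<notin> snd (snd (g y)) \<longrightarrow> Inl ` C i \<inter> fst (g y) \<noteq> {} \<longrightarrow> fst (snd (g y)) \<le> d (r i) p)"
    by (rule bchoice[elim_format]) blast
  define U where "U y = fst (g y)" for y
  define e where "e y = fst (snd (g y))" for y
  define F where "F y = snd (snd (g y))" for y
  have g': "\<And>y. y \<in> S \<Longrightarrow> openin Y (U y) \<and> y \<in> U y \<and> e y > 0 \<and> finite (F y) \<and>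
       (\<forall>i. i \<notin> F y \<longrightarrow> Inl ` C i \<inter> U y \<noteq> {} \<longrightarrow> e y \<le> d (r i) p)"
    using g unfolding U_def e_def F_def by blast
  obtain \<F> where FF: "finite \<F>" "\<F> \<subseteq> U ` S" "S \<subseteq> \<Union>\<F>"
    using compactinD[OF Scpt, of "U ` S"] g' by auto
  then obtain T where T: "T \<subseteq> S" "finite T" "\<F> = U ` T"
    using finite_subset_image by metis
  define \<delta> where "\<delta> = Min (insert 1 (e ` T))"
  have dpos: "\<delta> > 0" unfolding \<delta>_def using T g' by (subst Min_gr_iff) auto
  have dle: "\<delta> \<le> e y" if "y \<in> T" for y unfolding \<delta>_def using T(2) that by (intro Min_le) auto
  have finF: "finite (\<Union>y\<in>T. F y)" using T g' by blast
  have "Inl ` C i \<subseteq> V" if i: "i \<notin> (\<Union>y\<in>T. F y)" "d (r i) p < \<delta>" for i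
  proof
    fix u :: "'a + 'b" assume u: "u \<in> Inl ` C i"
    show "u \<in> V"
    proof (rule ccontr)
      assume "u \<notin> V"
      moreover have "u \<in> topspace Y" using u CinA topY by auto
      ultimately have "u \<in> S" by (simp add: S_def)
      then obtain y where y: "y \<in> T" "u \<in> U y" using FF T by auto
      then have "Inl ` C i \<inter> U y \<noteq> {}" using u by blast
      moreover have "i \<notin> F y" using i(1) y(1) by blast
      ultimately have "e y \<le> d (r i) p" using g' T(1) y(1) by blast
      then show False using dle[OF y(1)] i(2) by linarith
    qed
  qed
  then show ?thesis using dpos finF by blast
qed

end

definition fwd :: "(nat \<Rightarrow> nat \<Rightarrow> real) \<Rightarrow> nat \<Rightarrow> (nat \<times> nat) set \<Rightarrow> (nat \<times> nat) set" where
  "fwd D k P = (let i = (LEAST i. i \<notin> Domain P) in insert (i, SOME j. j \<notin> Range P \<and> D i j < rho k) P)"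

definition bkw :: "(nat \<Rightarrow> nat \<Rightarrow> real) \<Rightarrow> nat \<Rightarrow> (nat \<times> nat) set \<Rightarrow> (nat \<times> nat) set" where
  "bkw D k P = (let j = (LEAST j. j \<notin> Range P) in insert (SOME i. i \<notin> Domain P \<and> D i j < rho k, j) P)"

primrec bseq :: "(nat \<Rightarrow> nat \<Rightarrow> real) \<Rightarrow> nat \<Rightarrow> (nat \<times> nat) set" where
  "bseq D 0 = {}"
| "bseq D (Suc k) = bkw D k (fwd D k (bseq D k))"

definition pinj :: "(nat \<times> nat) set \<Rightarrow> bool" where
  "pinj P \<longleftrightarrow> finite P \<and> (\<forall>a b c. (a,b) \<in> P \<longrightarrow> (a,c) \<in> P \<longrightarrow> b = c) \<and> (\<forall>a b c. (a,c) \<in> P \<longrightarrow> (b,c) \<in> P \<longrightarrow> a = b)"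

lemma finite_Domain_nat: "finite P \<Longrightarrow> finite (Domain P)" for P :: "(nat \<times> nat) set"
  by (simp add: finite_Domain)

lemma ex_not_in_finite: "finite (S :: nat set) \<Longrightarrow> \<exists>x. x \<notin> S"
  using ex_new_if_finite[OF infinite_UNIV_nat] by blast

lemma ex_good_new:
  assumes "infinite {j. Q j}" "finite S"
  shows "\<exists>j. j \<notin> S \<and> Q j"
proof -
  have "infinite ({j. Q j} - S)" using assms by (rule Diff_infinite_finite[rotated])
  then obtain j where "j \<in> {j. Q j} - S" using infinite_imp_nonempty by blast
  then show ?thesis by blast
qed

context
  fixes D :: "nat \<Rightarrow> nat \<Rightarrow> real"
  assumes H1: "\<And>i t. t > 0 \<Longrightarrow> infinite {j. D i j < t}"
      and H2: "\<And>j t. t > 0 \<Longrightarrow> infinite {i. D i j < t}"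
begin

lemma fwd_props:
  fixes P :: "(nat \<times> nat) set" and k :: nat
  assumes P: "pinj P"
  defines "i \<equiv> LEAST i. i \<notin> Domain P"
  defines "j \<equiv> SOME j. j \<notin> Range P \<and> D i j < rho k"
  shows "fwd D k P = insert (i,j) P" "i \<notin> Domain P" "j \<notin> Range P" "D i j < rho k"
    "pinj (fwd D k P)" "\<And>x. x < i \<Longrightarrow> x \<in> Domain P"
proof -
  show fe: "fwd D k P = insert (i,j) P" unfolding fwd_def i_def j_def Let_def by simp
  have fin: "finite P" using P by (simp add: pinj_def)
  have exi: "\<exists>x. x \<notin> Domain P" using ex_not_in_finite fin finite_Domain by blast
  show ii: "i \<notin> Domain P" unfolding i_def using LeastI_ex[OF exi] .
  show "\<And>x. x < i \<Longrightarrow> x \<in> Domain P" unfolding i_def using not_less_Least by blast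
  have "\<exists>j. j \<notin> Range P \<and> D i j < rho k"
    using ex_good_new[OF H1[OF rho_pos] finite_Range[OF fin]] .
  from someI_ex[OF this] show jj: "j \<notin> Range P" "D i j < rho k" unfolding j_def by blast+
  show "pinj (fwd D k P)" using P ii jj(1) fin unfolding fe pinj_def by (auto simp: Domain.simps Range.simps)
qed

lemma bkw_props:
  fixes P :: "(nat \<times> nat) set" and k :: nat
  assumes P: "pinj P"
  defines "j \<equiv> LEAST j. j \<notin> Range P"
  defines "i \<equiv> SOME i. i \<notin> Domain P \<and> D i j < rho k"
  shows "bkw D k P = insert (i,j) P" "i \<notin> Domain P" "j \<notin> Range P" "D i j < rho k"
    "pinj (bkw D k P)" "\<And>x. x < j \<Longrightarrow> x \<in> Range P"
proof -
  show fe: "bkw D k P = insert (i,j) P" unfolding bkw_def i_def j_def Let_def by simp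
  have fin: "finite P" using P by (simp add: pinj_def)
  have exj: "\<exists>x. x \<notin> Range P" using ex_not_in_finite fin finite_Range by blast
  show jj: "j \<notin> Range P" unfolding j_def using LeastI_ex[OF exj] .
  show "\<And>x. x < j \<Longrightarrow> x \<in> Range P" unfolding j_def using not_less_Least by blast
  have "\<exists>i. i \<notin> Domain P \<and> D i j < rho k"
    using ex_good_new[OF H2[OF rho_pos] finite_Domain[OF fin]] .
  from someI_ex[OF this] show ii: "i \<notin> Domain P" "D i j < rho k" unfolding i_def by blast+
  show "pinj (bkw D k P)" using P ii(1) jj fin unfolding fe pinj_def by (auto simp: Domain.simps Range.simps)
qed

lemma bseq_pinj: "pinj (bseq D k)"
proof (induction k)
  case 0 then show ?case by (simp add: pinj_def)
next
  case (Suc k) then show ?case using fwd_props(5) bkw_props(5) by simp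
qed

lemma bseq_mono_Suc: "bseq D k \<subseteq> bseq D (Suc k)"
  using fwd_props(1)[OF bseq_pinj[of k]] bkw_props(1)[OF fwd_props(5)[OF bseq_pinj[of k]]] by auto

lemma bseq_mono: "m \<le> n \<Longrightarrow> bseq D m \<subseteq> bseq D n"
  by (induction n rule: dec_induct) (use bseq_mono_Suc in blast)+

lemma bseq_cover: "{..<k} \<subseteq> Domain (bseq D k) \<and> {..<k} \<subseteq> Range (bseq D k)"
proof (induction k)
  case 0 then show ?case by simp
next
  case (Suc k)
  let ?P = "bseq D k"
  let ?F = "fwd D k ?P"
  have P: "pinj ?P" by (rule bseq_pinj)
  have F: "pinj ?F" by (rule fwd_props(5)[OF P])
  have e: "bseq D (Suc k) = bkw D k ?F" by simp
  have d1: "k \<in> Domain ?F"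
  proof (cases "k \<in> Domain ?P")
    case True then show ?thesis using fwd_props(1)[OF P] by auto
  next
    case False
    let ?i = "LEAST i. i \<notin> Domain ?P"
    have "?i \<le> k" using False by (rule Least_le)
    moreover have "\<not> ?i < k" using Suc.IH fwd_props(2)[OF P] by auto
    ultimately have "?i = k" by simp
    then show ?thesis using fwd_props(1)[OF P] by (auto simp: Domain.simps)
  qed
  have r1: "k \<in> Range (bkw D k ?F)"
  proof (cases "k \<in> Range ?F")
    case True then show ?thesis using bkw_props(1)[OF F] by auto
  next
    case False
    let ?j = "LEAST j. j \<notin> Range ?F"
    have "?j \<le> k" using False by (rule Least_le)
    moreover have "\<not> ?j < k"
    proof
      assume "?j < k"
      then have "?j \<in> Range ?P" using Suc.IH by auto
      then have "?j \<in> Range ?F" using fwd_props(1)[OF P] by auto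
      then show False using bkw_props(3)[OF F] by simp
    qed
    ultimately have "?j = k" by simp
    then show ?thesis using bkw_props(1)[OF F] by (auto simp: Range.simps)
  qed
  have sub: "?P \<subseteq> bseq D (Suc k)" by (rule bseq_mono_Suc)
  have sub2: "?F \<subseteq> bseq D (Suc k)" using bkw_props(1)[OF F] by auto
  have "Domain ?P \<subseteq> Domain (bseq D (Suc k))" "Range ?P \<subseteq> Range (bseq D (Suc k))"
    using sub by auto
  moreover have "k \<in> Domain (bseq D (Suc k))" using d1 sub2 by auto
  moreover have "k \<in> Range (bseq D (Suc k))" using r1 e by simp
  ultimately show ?case using Suc.IH by (auto simp: lessThan_Suc)
qed

lemma bseq_small: "k \<le> n \<Longrightarrow> (a,b) \<in> bseq D n \<Longrightarrow> (a,b) \<in> bseq D k \<or> D a b < rho k"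
proof (induction n rule: dec_induct)
  case base then show ?case by simp
next
  case (step n)
  let ?P = "bseq D n"
  let ?F = "fwd D n ?P"
  have P: "pinj ?P" by (rule bseq_pinj)
  have F: "pinj ?F" by (rule fwd_props(5)[OF P])
  have "(a,b) \<in> ?P \<or> D a b < rho n"
  proof -
    have "(a,b) \<in> bkw D n ?F" using step.prems by simp
    then have "(a,b) \<in> ?F \<or> D a b < rho n" using bkw_props(1,4)[OF F] by auto
    then show ?thesis using fwd_props(1,4)[OF P] by auto
  qed
  moreover have "rho n \<le> rho k" using rho_mono step.hyps(1) by blast
  ultimately show ?case
  proof (elim disjE)
    assume "(a,b) \<in> ?P"
    then show ?case using step.IH by blast
  next
    assume "D a b < rho n" "rho n \<le> rho k"
    then show ?case by linarith
  qed
qed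

lemma matching: "\<exists>\<sigma>. bij \<sigma> \<and> (\<forall>t>0. finite {i. t \<le> D i (\<sigma> i)})"
proof -
  define R where "R = (\<Union>k. bseq D k)"
  have Rfun: "b = c" if ab: "(a,b) \<in> R" "(a,c) \<in> R" for a b c
  proof -
    obtain m n where "(a,b) \<in> bseq D m" "(a,c) \<in> bseq D n" using ab R_def by auto
    then have "(a,b) \<in> bseq D (max m n)" "(a,c) \<in> bseq D (max m n)" using bseq_mono by (meson max.cobounded1 max.cobounded2 subsetD)+
    then show ?thesis using bseq_pinj[of "max m n"] unfolding pinj_def by blast
  qed
  have Rinj: "a = b" if ab: "(a,c) \<in> R" "(b,c) \<in> R" for a b c
  proof -
    obtain m n where "(a,c) \<in> bseq D m" "(b,c) \<in> bseq D n" using ab R_def by auto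
    then have "(a,c) \<in> bseq D (max m n)" "(b,c) \<in> bseq D (max m n)" using bseq_mono by (meson max.cobounded1 max.cobounded2 subsetD)+
    then show ?thesis using bseq_pinj[of "max m n"] unfolding pinj_def by blast
  qed
  have Rtot: "\<exists>b. (a,b) \<in> R" for a
    using bseq_cover[of "Suc a"] unfolding R_def by blast
  have Rsurj: "\<exists>a. (a,b) \<in> R" for b
    using bseq_cover[of "Suc b"] unfolding R_def by blast
  define \<sigma> where "\<sigma> a = (THE b. (a,b) \<in> R)" for a
  have sig: "(a, \<sigma> a) \<in> R" for a
  proof -
    have "\<exists>!b. (a,b) \<in> R" using Rtot[of a] Rfun by blast
    then show ?thesis unfolding \<sigma>_def by (rule theI')
  qed
  have "inj \<sigma>"
  proof (rule injI)
    fix x y assume "\<sigma> x = \<sigma> y"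
    then have "(x, \<sigma> x) \<in> R" "(y, \<sigma> x) \<in> R" using sig[of x] sig[of y] by simp_all
    then show "x = y" by (rule Rinj)
  qed
  moreover have "surj \<sigma>"
  proof -
    have "b = \<sigma> a" if "(a,b) \<in> R" for a b using Rfun sig that by blast
    then show ?thesis unfolding surj_def using Rsurj by blast
  qed
  ultimately have "bij \<sigma>" by (simp add: bij_def)
  moreover have "finite {i. t \<le> D i (\<sigma> i)}" if t: "t > 0" for t
  proof -
    obtain k where k: "k > 0" "inverse (real k) < t" using ex_inverse_of_nat_less[OF t] by blast
    have "rho k \<le> inverse (real k)" using k(1) by (simp add: rho_def field_simps)
    then have rk: "rho k < t" using k(2) by linarith
    have "{i. t \<le> D i (\<sigma> i)} \<subseteq> Domain (bseq D k)"
    proof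
      fix i assume i: "i \<in> {i. t \<le> D i (\<sigma> i)}"
      have "(i, \<sigma> i) \<in> (\<Union>k. bseq D k)" using sig[of i] unfolding R_def .
      then obtain n where n: "(i, \<sigma> i) \<in> bseq D n" by blast
      then have "(i, \<sigma> i) \<in> bseq D (max n k)" using bseq_mono[of n "max n k"] by auto
      then have "(i, \<sigma> i) \<in> bseq D k \<or> D i (\<sigma> i) < rho k" using bseq_small[of k "max n k" i "\<sigma> i"] by simp
      moreover have "\<not> D i (\<sigma> i) < rho k" using i rk by simp
      ultimately show "i \<in> Domain (bseq D k)" by blast
    qed
    moreover have "finite (bseq D k)" using bseq_pinj[of k] unfolding pinj_def by blast
    then have "finite (Domain (bseq D k))" by (rule finite_Domain)
    ultimately show ?thesis by (rule finite_subset)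
  qed
  ultimately show ?thesis by blast
qed

end

lemma build_homeo:
  fixes X :: "'a topology" and Z :: "'b topology"
  assumes I1: "cptf M d X Z f C" and I2: "cptf M d X Z g C'"
    and psi_cont: "continuous_map X X \<psi>" and psi_bij: "bij_betw \<psi> (topspace X) (topspace X)"
    and sig: "bij \<sigma>" and sfin: "\<And>t. t > 0 \<Longrightarrow> finite {i. t \<le> d (cptf.r M d X Z f C i) (cptf.r M d X Z g C' (\<sigma> i))}"
    and psiC: "\<And>i x. x \<in> C i \<Longrightarrow> \<psi> x \<in> C' (\<sigma> i)"
  shows "glue X Z f homeomorphic_space glue X Z g"
proof -
  interpret I1: cptf M d X Z f C by (rule I1)
  interpret I2: cptf M d X Z g C' by (rule I2)
  let ?Y = "glue X Z f" and ?Y' = "glue X Z g"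
  let ?r = "I1.r" and ?r' = "I2.r"
  define h where "h u = (case u of Inl x \<Rightarrow> Inl (\<psi> x) | Inr z \<Rightarrow> Inr z)" for u :: "'a + 'b"
  have hl: "h (Inl x) = Inl (\<psi> x)" for x by (simp add: h_def)
  have hr: "h (Inr z) = Inr z" for z by (simp add: h_def)
  have psi_img: "\<psi> ` topspace X = topspace X" and psi_inj: "inj_on \<psi> (topspace X)"
    using psi_bij by (auto simp: bij_betw_def)
  have himg: "h ` topspace ?Y = topspace ?Y'"
  proof -
    have "h ` topspace ?Y = h ` (Inl ` topspace X) \<union> h ` (Inr ` M)" using I1.topY by (simp add: image_Un)
    also have "h ` (Inl ` topspace X) = Inl ` (\<psi> ` topspace X)" by (simp add: image_image hl)
    also have "h ` (Inr ` M) = Inr ` M" by (simp add: image_image hr)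
    finally show ?thesis using I2.topY psi_img by simp
  qed
  have hinj: "inj_on h (topspace ?Y)"
  proof (rule inj_onI)
    fix u v assume uv: "u \<in> topspace ?Y" "v \<in> topspace ?Y" "h u = h v"
    show "u = v"
    proof (cases u)
      case (Inl x)
      then have x: "x \<in> topspace X" using uv(1) I1.topY by auto
      show ?thesis
      proof (cases v)
        case (Inl y)
        then have y: "y \<in> topspace X" using uv(2) I1.topY by auto
        have "\<psi> x = \<psi> y" using uv(3) \<open>u = Inl x\<close> Inl by (simp add: hl)
        then show ?thesis using inj_onD[OF psi_inj _ x y] \<open>u = Inl x\<close> Inl by simp
      next
        case (Inr z)
        then show ?thesis using uv(3) \<open>u = Inl x\<close> by (simp add: hl hr)
      qed
    next
      case (Inr z)
      show ?thesis
      proof (cases v)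
        case (Inl y)
        then show ?thesis using uv(3) \<open>u = Inr z\<close> by (simp add: hl hr)
      next
        case (Inr z')
        then show ?thesis using uv(3) \<open>u = Inr z\<close> by (simp add: hl hr)
      qed
    qed
  qed
  have hcont: "continuous_map ?Y ?Y' h"
    unfolding continuous_map_def
  proof (intro conjI allI impI)
    show "h \<in> topspace ?Y \<rightarrow> topspace ?Y'" using himg by blast
    fix V assume V: "openin ?Y' V"
    show "openin ?Y {u \<in> topspace ?Y. h u \<in> V}"
    proof (subst openin_subopen, intro ballI)
      fix u assume u: "u \<in> {u \<in> topspace ?Y. h u \<in> V}"
      then have uY: "u \<in> Inl ` topspace X \<union> Inr ` M" and uV: "h u \<in> V" using I1.topY by auto
      then consider x where "u = Inl x" "x \<in> topspace X" | p where "u = Inr p" "p \<in> M" by blast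
      then show "\<exists>T. openin ?Y T \<and> u \<in> T \<and> T \<subseteq> {u \<in> topspace ?Y. h u \<in> V}"
      proof cases
        case 1
        have o1: "openin X {x \<in> topspace X. Inl x \<in> V}"
          using continuous_map_glue_Inl[OF I2.adm] V unfolding continuous_map_def by blast
        have o2: "openin X {x \<in> topspace X. \<psi> x \<in> {x \<in> topspace X. Inl x \<in> V}}"
          using psi_cont o1 unfolding continuous_map_def by blast
        let ?T = "Inl ` {x \<in> topspace X. \<psi> x \<in> {x \<in> topspace X. Inl x \<in> V}}"
        have "openin ?Y ?T" using openin_glue_Inl[OF I1.adm o2] .
        moreover have "u \<in> ?T" using 1 uV psi_img by (auto simp: hl)
        moreover have "?T \<subseteq> {u \<in> topspace ?Y. h u \<in> V}" using I1.topY by (auto simp: hl)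
        ultimately show ?thesis by blast
      next
        case 2
        have pV: "Inr p \<in> V" using uV 2 by (simp add: hr)
        obtain \<delta>1 F' where d1: "\<delta>1 > 0" "finite F'" "\<forall>i. i \<notin> F' \<longrightarrow> d (?r' i) p < \<delta>1 \<longrightarrow> Inl ` C' i \<subseteq> V"
          using I2.propA[OF 2(2) V pV] by blast
        have oO: "openin Z {z \<in> M. Inr z \<in> V}" using I2.openB_Inr[OF V] .
        then obtain \<delta>2 where d2: "\<delta>2 > 0" "I1.mball p \<delta>2 \<subseteq> {z \<in> M. Inr z \<in> V}"
          using 2 pV I1.mtop I1.openin_mtopology by (metis (no_types, lifting) mem_Collect_eq)
        define \<delta> where "\<delta> = min \<delta>1 \<delta>2 / 2"
        have dpos: "\<delta> > 0" using d1(1) d2(1) by (simp add: \<delta>_def)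
        obtain U0 F where U0: "openin ?Y U0" "Inr p \<in> U0" "finite F"
            "\<forall>i. i \<notin> F \<longrightarrow> Inl ` C i \<inter> U0 \<noteq> {} \<longrightarrow> d (?r i) p < \<delta>"
          using I1.propB[OF 2(2) dpos] by blast
        define bad where "bad = F \<union> \<sigma> -` F' \<union> {i. \<delta> \<le> d (?r i) (?r' (\<sigma> i))}"
        have finbad: "finite bad" unfolding bad_def
          using U0(3) sfin[OF dpos] finite_vimageI[OF d1(2), of \<sigma>] sig
          by (simp add: bij_def)
        define U where "U = (U0 - Inr ` (M - I1.mball p \<delta>)) - (\<Union>i\<in>bad. Inl ` C i)"
        have cl1: "closedin Z (M - I1.mball p \<delta>)"
          using I1.mtop I1.topB by (metis I1.openin_mball closedin_diff closedin_topspace)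
        have oU: "openin ?Y U" unfolding U_def
          by (intro openin_diff U0(1) I1.closedB_Inr cl1 I1.closedC_Union finbad)
        have pU: "u \<in> U" unfolding U_def using U0(2) 2 dpos by auto
        have "U \<subseteq> {u \<in> topspace ?Y. h u \<in> V}"
        proof
          fix w assume w: "w \<in> U"
          then have wY: "w \<in> topspace ?Y" using oU openin_subset by blast
          have wA: "w \<in> U0 - Inr ` (M - I1.mball p \<delta>)" using w unfolding U_def by (rule DiffD1)
          have wn2: "w \<notin> (\<Union>i\<in>bad. Inl ` C i)" using w unfolding U_def by (elim DiffE)
          have wU0: "w \<in> U0" using wA by (rule DiffD1)
          have wn1: "w \<notin> Inr ` (M - I1.mball p \<delta>)" using wA by (elim DiffE)
          have "w \<in> Inl ` topspace X \<union> Inr ` M" using wY I1.topY by simp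
          then consider x where "w = Inl x" "x \<in> topspace X" | z where "w = Inr z" "z \<in> M" by blast
          then show "w \<in> {u \<in> topspace ?Y. h u \<in> V}"
          proof cases
            case 1
            obtain i where xi: "x \<in> C i" using I1.Ccover 1(2) by blast
            have wi: "w \<in> Inl ` C i" using 1 xi by simp
            have ib: "i \<notin> bad"
            proof
              assume ib': "i \<in> bad"
              have "w \<in> (\<Union>i\<in>bad. Inl ` C i)" by (rule UN_I[where B="\<lambda>i. Inl ` C i", OF ib' wi])
              then show False using wn2 by contradiction
            qed
            have "Inl ` C i \<inter> U0 \<noteq> {}" using wi wU0 by blast
            then have a: "d (?r i) p < \<delta>" using U0(4) ib unfolding bad_def by blast
            have b: "d (?r i) (?r' (\<sigma> i)) < \<delta>" using ib unfolding bad_def by auto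
            have c: "\<sigma> i \<notin> F'" using ib unfolding bad_def by auto
            have "d (?r' (\<sigma> i)) p \<le> d (?r' (\<sigma> i)) (?r i) + d (?r i) p"
              using I1.triangle I1.r_in_M I2.r_in_M 2(2) by blast
            moreover have "d (?r' (\<sigma> i)) (?r i) = d (?r i) (?r' (\<sigma> i))" using I1.commute by blast
            ultimately have "d (?r' (\<sigma> i)) p < \<delta>1" using a b unfolding \<delta>_def by linarith
            then have "Inl ` C' (\<sigma> i) \<subseteq> V" using d1(3) c by blast
            then have "h w \<in> V" using 1 psiC[OF xi] by (auto simp: hl)
            then show ?thesis using wY by blast
          next
            case 2
            have "z \<notin> M - I1.mball p \<delta>"
            proof
              assume "z \<in> M - I1.mball p \<delta>"
              then have "(Inr z :: 'a + 'b) \<in> Inr ` (M - I1.mball p \<delta>)" by (rule imageI)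
              then show False using wn1 2(1) by simp
            qed
            then have "z \<in> I1.mball p \<delta>" using 2(2) by blast
            then have "z \<in> I1.mball p \<delta>2" using I1.mball_subset_concentric[of \<delta> \<delta>2 p] d1(1) d2(1)
              unfolding \<delta>_def by auto
            then have "Inr z \<in> V" using d2(2) by blast
            then show ?thesis using wY 2 by (simp add: hr)
          qed
        qed
        then show ?thesis using oU pU by blast
      qed
    qed
  qed
  have "homeomorphic_map ?Y ?Y' h"
    using continuous_imp_homeomorphic_map[OF hcont I1.cpt I2.haus himg hinj] .
  then show ?thesis by (rule homeomorphic_map_imp_homeomorphic_space)
qed


lemma E_in_decomp:
  assumes "is_coproduct_decomp X C"
  shows "{(x,y). x \<in> topspace X \<and> y \<in> topspace X \<and> (\<exists>i. x \<in> C i \<and> y \<in> C i)} \<in> decomp_coarse X C"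
proof -
  have th: "(THE i. x \<in> C i) = j" if "x \<in> C j" for x j
  proof (rule the_equality)
    show "x \<in> C j" by (rule that)
    fix i assume "x \<in> C i"
    then show "i = j" using that assms unfolding is_coproduct_decomp_def by blast
  qed
  have "Id \<in> zeta" by (simp add: zeta_def)
  moreover have "{(x,y). x \<in> topspace X \<and> y \<in> topspace X \<and> (\<exists>i. x \<in> C i \<and> y \<in> C i)} \<subseteq>
      {(x,y). x \<in> topspace X \<and> y \<in> topspace X \<and> ((THE i. x \<in> C i), (THE i. y \<in> C i)) \<in> Id}"
    using th by auto
  ultimately show ?thesis unfolding decomp_coarse_def by blast
qed

lemma pieces:
  assumes "compact_space K" "is_coproduct_decomp X C" "homeomorphic_map K (subtopology X (C i)) (\<eta> i)"
  shows "\<eta> i ` topspace K = C i" "compactin X (C i)"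
proof -
  have sub: "C i \<subseteq> topspace X" using assms(2) unfolding is_coproduct_decomp_def by blast
  show "\<eta> i ` topspace K = C i"
    using homeomorphic_imp_surjective_map[OF assms(3)] sub by auto
  have "compact_space (subtopology X (C i))"
    using homeomorphic_compact_space[OF homeomorphic_map_imp_homeomorphic_space[OF assms(3)]] assms(1) by blast
  then show "compactin X (C i)" using sub compactin_subspace by blast
qed

lemma remainder_nonempty:
  assumes adm: "admissible X Z f" and cpt: "compact_space (glue X Z f)"
    and dec: "is_coproduct_decomp X C" and ne: "\<And>i. C i \<noteq> {}"
  shows "topspace Z \<noteq> {}"
proof
  assume Z: "topspace Z = {}"
  have top: "topspace (glue X Z f) = Inl ` topspace X"
    unfolding topspace_glue[OF adm] glue_carrier_def Z by simp
  have op: "openin (glue X Z f) (Inl ` C i)" for i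
    using dec openin_glue_Inl[OF adm] unfolding is_coproduct_decomp_def by blast
  have cov: "topspace (glue X Z f) \<subseteq> \<Union>(range (\<lambda>i. Inl ` C i))"
  proof
    fix u assume "u \<in> topspace (glue X Z f)"
    then obtain x where x: "u = Inl x" "x \<in> topspace X" using top by blast
    then obtain i where "x \<in> C i" using dec unfolding is_coproduct_decomp_def by blast
    then show "u \<in> \<Union>(range (\<lambda>i. Inl ` C i))" using x by blast
  qed
  obtain \<F> where F: "finite \<F>" "\<F> \<subseteq> range (\<lambda>i. Inl ` C i)" "topspace (glue X Z f) \<subseteq> \<Union>\<F>"
    using compact_space_alt[THEN iffD1, OF cpt, rule_format, of "range (\<lambda>i. Inl ` C i)"] op cov by blast
  then obtain I where I: "finite I" "\<F> = (\<lambda>i. Inl ` C i) ` I"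
    using finite_subset_image[OF F(1) F(2)] by blast
  obtain N where N: "\<forall>i\<in>I. i < N" using I(1) finite_nat_bounded by blast
  obtain a where a: "a \<in> C N" using ne by blast
  have "Inl a \<in> topspace (glue X Z f)" using a top dec unfolding is_coproduct_decomp_def by auto
  then obtain i where i: "i \<in> I" "Inl a \<in> Inl ` C i" using F(3) I(2) by auto
  then have "a \<in> C i \<inter> C N" using a by auto
  moreover have "i \<noteq> N" using N i(1) by auto
  ultimately show False using dec unfolding is_coproduct_decomp_def by blast
qed


lemma psi_construction:
  fixes K :: "'c topology" and X :: "'a topology"
    and C C' :: "nat \<Rightarrow> 'a set" and \<eta> \<eta>' :: "nat \<Rightarrow> 'c \<Rightarrow> 'a"
  assumes dec: "is_coproduct_decomp X C" and dec': "is_coproduct_decomp X C'"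
    and h: "\<And>i. homeomorphic_map K (subtopology X (C i)) (\<eta> i)"
    and h': "\<And>i. homeomorphic_map K (subtopology X (C' i)) (\<eta>' i)"
    and sig: "bij \<sigma>"
  shows "\<exists>\<psi>. continuous_map X X \<psi> \<and> bij_betw \<psi> (topspace X) (topspace X) \<and> (\<forall>i x. x \<in> C i \<longrightarrow> \<psi> x \<in> C' (\<sigma> i))"
proof -
  have "\<forall>i. \<exists>g. homeomorphic_maps K (subtopology X (C i)) (\<eta> i) g"
    using h homeomorphic_map_maps by blast
  then obtain G where G: "\<forall>i. homeomorphic_maps K (subtopology X (C i)) (\<eta> i) (G i)"
    by (rule choice[elim_format]) blast
  have Csub: "C i \<subseteq> topspace X" for i using dec unfolding is_coproduct_decomp_def by blast
  have C'sub: "C' i \<subseteq> topspace X" for i using dec' unfolding is_coproduct_decomp_def by blast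
  have Cop: "openin X (C i)" for i using dec unfolding is_coproduct_decomp_def by blast
  have Ccov: "x \<in> topspace X \<Longrightarrow> \<exists>i. x \<in> C i" for x using dec unfolding is_coproduct_decomp_def by blast
  have C'cov: "x \<in> topspace X \<Longrightarrow> \<exists>i. x \<in> C' i" for x using dec' unfolding is_coproduct_decomp_def by blast
  have Cdj: "x \<in> C i \<Longrightarrow> x \<in> C j \<Longrightarrow> i = j" for x i j using dec unfolding is_coproduct_decomp_def by blast
  have C'dj: "x \<in> C' i \<Longrightarrow> x \<in> C' j \<Longrightarrow> i = j" for x i j using dec' unfolding is_coproduct_decomp_def by blast
  have topC: "topspace (subtopology X (C i)) = C i" for i using Csub by auto
  have topC': "topspace (subtopology X (C' i)) = C' i" for i using C'sub by auto
  have Gc: "continuous_map (subtopology X (C i)) K (G i)" for i using G unfolding homeomorphic_maps_def by blast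
  have Gin: "x \<in> C i \<Longrightarrow> G i x \<in> topspace K" for i x
    using Gc[of i] topC[of i] unfolding continuous_map_def by blast
  have GK: "k \<in> topspace K \<Longrightarrow> G i (\<eta> i k) = k" for i k using G unfolding homeomorphic_maps_def by blast
  have etaG: "x \<in> C i \<Longrightarrow> \<eta> i (G i x) = x" for i x using G topC unfolding homeomorphic_maps_def by blast
  have eta'c: "continuous_map K X (\<eta>' j)" for j
    using h'[of j] homeomorphic_imp_continuous_map continuous_map_in_subtopology by blast
  have eta'img: "\<eta>' j ` topspace K = C' j" for j
    using homeomorphic_imp_surjective_map[OF h'[of j]] topC' by simp
  have eta'inj: "inj_on (\<eta>' j) (topspace K)" for j
    using homeomorphic_imp_injective_map[OF h'[of j]] .
  have etaimg: "\<eta> j ` topspace K = C j" for j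
    using homeomorphic_imp_surjective_map[OF h[of j]] topC by simp
  define \<pi> where "\<pi> x = (THE i. x \<in> C i)" for x
  have pi: "x \<in> C i \<Longrightarrow> \<pi> x = i" for x i
    unfolding \<pi>_def using Cdj by blast
  define \<psi> where "\<psi> x = \<eta>' (\<sigma> (\<pi> x)) (G (\<pi> x) x)" for x
  have psiC: "x \<in> C i \<Longrightarrow> \<psi> x = \<eta>' (\<sigma> i) (G i x)" for x i by (simp add: \<psi>_def pi)
  have psiC': "x \<in> C i \<Longrightarrow> \<psi> x \<in> C' (\<sigma> i)" for x i
    using psiC Gin eta'img by blast
  have cont: "continuous_map X X \<psi>"
    unfolding continuous_map_def
  proof (intro conjI allI impI)
    show "\<psi> \<in> topspace X \<rightarrow> topspace X"
    proof
      fix x assume "x \<in> topspace X"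
      then obtain i where "x \<in> C i" using Ccov by blast
      then show "\<psi> x \<in> topspace X" using psiC' C'sub by blast
    qed
    fix V assume V: "openin X V"
    show "openin X {x \<in> topspace X. \<psi> x \<in> V}"
    proof (subst openin_subopen, intro ballI)
      fix x assume x: "x \<in> {x \<in> topspace X. \<psi> x \<in> V}"
      then obtain i where xi: "x \<in> C i" using Ccov by blast
      have cc: "continuous_map (subtopology X (C i)) X (\<eta>' (\<sigma> i) \<circ> G i)"
        using continuous_map_compose[OF Gc eta'c] .
      let ?T = "{y \<in> topspace (subtopology X (C i)). (\<eta>' (\<sigma> i) \<circ> G i) y \<in> V}"
      have "openin (subtopology X (C i)) ?T" using cc V unfolding continuous_map_def by blast
      then have oT: "openin X ?T" using Cop openin_trans_full by blast
      have "x \<in> ?T" using x xi psiC topC by auto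
      moreover have "?T \<subseteq> {x \<in> topspace X. \<psi> x \<in> V}" using topC psiC Csub by auto
      ultimately show "\<exists>T. openin X T \<and> x \<in> T \<and> T \<subseteq> {x \<in> topspace X. \<psi> x \<in> V}" using oT by blast
    qed
  qed
  have inj: "inj_on \<psi> (topspace X)"
  proof (rule inj_onI)
    fix x y assume x: "x \<in> topspace X" and y: "y \<in> topspace X" and e: "\<psi> x = \<psi> y"
    obtain i where xi: "x \<in> C i" using Ccov x by blast
    obtain j where yj: "y \<in> C j" using Ccov y by blast
    have "\<psi> x \<in> C' (\<sigma> i)" "\<psi> x \<in> C' (\<sigma> j)" using psiC'[OF xi] psiC'[OF yj] e by auto
    then have "\<sigma> i = \<sigma> j" using C'dj by blast
    then have ij: "i = j" using sig by (simp add: bij_def inj_eq)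
    have "\<eta>' (\<sigma> i) (G i x) = \<eta>' (\<sigma> i) (G i y)" using e psiC[OF xi] psiC[OF yj] ij by simp
    then have "G i x = G i y" using inj_onD[OF eta'inj] Gin xi yj ij by blast
    then show "x = y" using etaG[OF xi] etaG yj ij by metis
  qed
  have img: "\<psi> ` topspace X = topspace X"
  proof
    show "\<psi> ` topspace X \<subseteq> topspace X" using cont unfolding continuous_map_def by blast
    show "topspace X \<subseteq> \<psi> ` topspace X"
    proof
      fix y assume y: "y \<in> topspace X"
      then obtain j where yj: "y \<in> C' j" using C'cov by blast
      obtain i where ij: "\<sigma> i = j" using sig by (metis bij_def surj_def)
      obtain k where k: "k \<in> topspace K" "y = \<eta>' j k" using yj eta'img by blast
      have xi: "\<eta> i k \<in> C i" using k(1) etaimg by blast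
      have "\<psi> (\<eta> i k) = y" using psiC[OF xi] GK[OF k(1)] k(2) ij by simp
      moreover have "\<eta> i k \<in> topspace X" using xi Csub by blast
      ultimately show "y \<in> \<psi> ` topspace X" by blast
    qed
  qed
  have "bij_betw \<psi> (topspace X) (topspace X)" using inj img by (simp add: bij_betw_def)
  then show ?thesis using cont psiC' by blast
qed

theorem mainTheorem7:
  fixes K :: "'c topology" and X :: "'a topology" and Z :: "'b topology"
    and C C' :: "nat \<Rightarrow> 'a set" and \<eta> \<eta>' :: "nat \<Rightarrow> 'c \<Rightarrow> 'a"
    and f g :: "'a set \<Rightarrow> 'b set"
  assumes "compact_space K" and "Hausdorff_space K"
    and "is_coproduct_decomp X C" and "is_coproduct_decomp X C'"
    and "\<And>i. homeomorphic_map K (subtopology X (C i)) (\<eta> i)"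
    and "\<And>i. homeomorphic_map K (subtopology X (C' i)) (\<eta>' i)"
    and "compact_space Z" and "metrizable_space Z"
    and "in_Pers (decomp_coarse X C) X Z f"
    and "in_Pers (decomp_coarse X C') X Z g"
  shows "glue X Z f homeomorphic_space glue X Z g"
proof -
  have hf: "hausdorff_compactification X Z f" and pf: "\<forall>e\<in>decomp_coarse X C. perspective X Z f e"
    using assms(9) unfolding in_Pers_def by auto
  have hg: "hausdorff_compactification X Z g" and pg: "\<forall>e\<in>decomp_coarse X C'. perspective X Z g e"
    using assms(10) unfolding in_Pers_def by auto
  have admf: "admissible X Z f" and cptf: "compact_space (glue X Z f)" and hausf: "Hausdorff_space (glue X Z f)"
    and densef: "glue X Z f closure_of (Inl ` topspace X) = topspace (glue X Z f)"
    using hf unfolding hausdorff_compactification_def by auto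
  have admg: "admissible X Z g" and cptg: "compact_space (glue X Z g)" and hausg: "Hausdorff_space (glue X Z g)"
    and denseg: "glue X Z g closure_of (Inl ` topspace X) = topspace (glue X Z g)"
    using hg unfolding hausdorff_compactification_def by auto
  have Cimg: "\<eta> i ` topspace K = C i" and Ccpt: "compactin X (C i)" for i
    using pieces[where \<eta>=\<eta> and i=i, OF assms(1) assms(3) assms(5)[of i]] by auto
  have C'img: "\<eta>' i ` topspace K = C' i" and C'cpt: "compactin X (C' i)" for i
    using pieces[where \<eta>=\<eta>' and i=i, OF assms(1) assms(4) assms(6)[of i]] by auto
  have Csub: "C i \<subseteq> topspace X" for i using assms(3) unfolding is_coproduct_decomp_def by blast
  have C'sub: "C' i \<subseteq> topspace X" for i using assms(4) unfolding is_coproduct_decomp_def by blast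
  have starf: "\<And>p V. p \<in> topspace Z \<Longrightarrow> openin (glue X Z f) V \<Longrightarrow> Inr p \<in> V \<Longrightarrow>
        \<exists>W. openin (glue X Z f) W \<and> Inr p \<in> W \<and> (\<forall>i. Inl ` C i \<inter> W \<noteq> {} \<longrightarrow> Inl ` C i \<subseteq> V)"
    by (rule glue_star[OF admf cptf Csub bspec[OF pf E_in_decomp[OF assms(3)]]])
  have starg: "\<And>p V. p \<in> topspace Z \<Longrightarrow> openin (glue X Z g) V \<Longrightarrow> Inr p \<in> V \<Longrightarrow>
        \<exists>W. openin (glue X Z g) W \<and> Inr p \<in> W \<and> (\<forall>i. Inl ` C' i \<inter> W \<noteq> {} \<longrightarrow> Inl ` C' i \<subseteq> V)"
    by (rule glue_star[OF admg cptg C'sub bspec[OF pg E_in_decomp[OF assms(4)]]])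
  show ?thesis
  proof (cases "topspace K = {}")
    case True
    then have "C i = {}" for i using Cimg[of i] by simp
    then have tX: "topspace X = {}" using assms(3) unfolding is_coproduct_decomp_def by auto
    have tf: "topspace (glue X Z f) = {}" using densef tX by simp
    have tg: "topspace (glue X Z g) = {}" using denseg tX by simp
    have "continuous_map (glue X Z f) (glue X Z g) id"
      unfolding continuous_map_def tf by simp
    then have "homeomorphic_map (glue X Z f) (glue X Z g) id"
      using continuous_imp_homeomorphic_map[OF _ cptf hausg] tf tg by simp
    then show ?thesis by (rule homeomorphic_map_imp_homeomorphic_space)
  next
    case False
    then have Cne: "C i \<noteq> {}" and C'ne: "C' i \<noteq> {}" for i using Cimg[of i] C'img[of i] by auto
    have Zne: "topspace Z \<noteq> {}" using remainder_nonempty[OF admf cptf assms(3)] Cne by blast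
    obtain M d where met: "Metric_space M d" and Zm: "Z = Metric_space.mtopology M d"
      using assms(8) unfolding metrizable_space_def by blast
    have mtop: "Metric_space.mtopology M d = Z" using Zm by simp
    have MZ: "M = topspace Z" using Metric_space.topspace_mtopology[OF met] Zm by simp
    have Mne: "M \<noteq> {}" using Zne MZ by simp
    have starf': "\<And>p V. p \<in> topspace Z \<Longrightarrow> openin (glue X Z f) V \<Longrightarrow> Inr p \<in> V \<Longrightarrow>
        \<exists>W. openin (glue X Z f) W \<and> Inr p \<in> W \<and> (\<forall>i. Inl ` C i \<inter> W \<noteq> {} \<longrightarrow> Inl ` C i \<subseteq> V)"
      by (rule starf)
    have I1: "cptf M d X Z f C"
      by (intro cptf.intro cptf_axioms.intro met admf cptf hausf densef assms(3) Ccpt Cne starf mtop assms(7) Mne)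
    have I2: "cptf M d X Z g C'"
      by (intro cptf.intro cptf_axioms.intro met admg cptg hausg denseg assms(4) C'cpt C'ne starg mtop assms(7) Mne)
    define r1 where "r1 = cptf.r M d X Z f C"
    define r2 where "r2 = cptf.r M d X Z g C'"
    have r1M: "r1 i \<in> M" for i unfolding r1_def using cptf.r_in_M[OF I1] .
    have r2M: "r2 i \<in> M" for i unfolding r2_def using cptf.r_in_M[OF I2] .
    have H1: "infinite {j. d (r1 i) (r2 j) < t}" if "t > 0" for i t
    proof -
      have "infinite {j. d (r2 j) (r1 i) < t}" unfolding r2_def
        using cptf.propC[OF I2 r1M that] .
      moreover have "d (r2 j) (r1 i) = d (r1 i) (r2 j)" for j using Metric_space.commute[OF met] by blast
      ultimately show ?thesis by simp
    qed
    have H2: "infinite {i. d (r1 i) (r2 j) < t}" if "t > 0" for j t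
      unfolding r1_def using cptf.propC[OF I1 r2M that] .
    obtain \<sigma> where sig: "bij \<sigma>" and sfin: "\<forall>t>0. finite {i. t \<le> d (r1 i) (r2 (\<sigma> i))}"
      using matching[of "\<lambda>i j. d (r1 i) (r2 j)"] H1 H2 by blast
    obtain \<psi> where psi: "continuous_map X X \<psi>" "bij_betw \<psi> (topspace X) (topspace X)"
        "\<forall>i x. x \<in> C i \<longrightarrow> \<psi> x \<in> C' (\<sigma> i)"
      using psi_construction[OF assms(3) assms(4) assms(5) assms(6) sig] by blast
    have sf: "finite {i. t \<le> d (cptf.r M d X Z f C i) (cptf.r M d X Z g C' (\<sigma> i))}" if "t > 0" for t
      using sfin that unfolding r1_def r2_def by blast
    have pc: "\<psi> x \<in> C' (\<sigma> i)" if "x \<in> C i" for i x using psi(3) that by blast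
    show ?thesis
      by (rule build_homeo[OF I1 I2 psi(1) psi(2) sig sf pc])
  qed
qed


end
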